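(* Consider a single agent with finite action set $A$, $|A|=m$, and utility $U:A\to[0,1]$, who in each round plays an action maximizing $U(a)+P^t(a)$ for the principal's payment $P^t:A\to\mathbb{R}_+$. Consider the principal algorithm: in round 1 pay nothing and observe the agent's optimal action $a^*=\arg\max_aU(a)$, and set $\tilde U(a^* )=0$; then for each $a\in A\setminus\{a^*\}$, pay $0$ on all actions other than $a$ and pay $P(a)=0,\varepsilon,2\varepsilon,\dots$ on $a$ in successive rounds until the agent plays $a$, and if this happens at $P(a)=k\varepsilon$ set $\tilde U(a)=-k\varepsilon$; output $\tilde U$. This algorithm $\varepsilon$-learns the game with total payment $\sum_tP^t(a^t)$ at most $\Delta+m\varepsilon$, where $\Delta=\sum_{a\in A}(U(a^* )-U(a))$.
   Context: The principal $\varepsilon$-learns the game if its output $\tilde U$ satisfies $|U(a)+W-\tilde U(a)|\le\varepsilon$ for all $a\in A$ for some constant $W$. $a^t$ is the agent's action in round $t$, and the agent receives $P^t(a^t)$. *)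

theory Defs
  imports Complex_Main
begin

text \<open>Agent: in round t (0-based; round 0 is the paper's round 1), facing payment P,
  plays the action ag t P.  It is a best responder if the played action maximizes U + P
  (ties broken arbitrarily, possibly depending on the round).\<close>

definition best_responder :: "('a \<Rightarrow> real) \<Rightarrow> (nat \<Rightarrow> ('a \<Rightarrow> real) \<Rightarrow> 'a) \<Rightarrow> bool" where
  "best_responder U ag \<longleftrightarrow>
     (\<forall>t P. (\<forall>b. P b \<ge> 0) \<longrightarrow> (\<forall>b. U b + P b \<le> U (ag t P) + P (ag t P)))"

definition pay_on :: "'a \<Rightarrow> real \<Rightarrow> 'a \<Rightarrow> real" where
  "pay_on a c = (\<lambda>b. if b = a then c else 0)"

text \<open>Phases of the algorithm, starting at round t, for the remaining actions.
  Returns the transcript (list of (payment, played action) per round) and the estimates.\<close>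
fun phases :: "(nat \<Rightarrow> ('a \<Rightarrow> real) \<Rightarrow> 'a) \<Rightarrow> real \<Rightarrow> nat \<Rightarrow> 'a list
                 \<Rightarrow> (('a \<Rightarrow> real) \<times> 'a) list \<times> ('a \<Rightarrow> real)" where
  "phases ag eps t [] = ([], (\<lambda>_. 0))"
| "phases ag eps t (a # as) =
     (let k = (LEAST k::nat. ag (t + k) (pay_on a (real k * eps)) = a);
          tr = map (\<lambda>j. (pay_on a (real j * eps), ag (t + j) (pay_on a (real j * eps)))) [0..<Suc k];
          (tr', Ut) = phases ag eps (t + Suc k) as
      in (tr @ tr', Ut(a := - (real k * eps))))"

definition principal_alg :: "(nat \<Rightarrow> ('a \<Rightarrow> real) \<Rightarrow> 'a) \<Rightarrow> real \<Rightarrow> 'a list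
                 \<Rightarrow> (('a \<Rightarrow> real) \<times> 'a) list \<times> ('a \<Rightarrow> real)" where
  "principal_alg ag eps as =
     (let P0 = (\<lambda>_. 0::real); astar = ag 0 P0; (tr, Ut) = phases ag eps 1 as
      in ((P0, astar) # tr, Ut(astar := 0)))"

definition total_payment :: "(('a \<Rightarrow> real) \<times> 'a) list \<Rightarrow> real" where
  "total_payment tr = (\<Sum>(P, b) \<leftarrow> tr. P b)"

definition eps_learns :: "('a \<Rightarrow> real) \<Rightarrow> real \<Rightarrow> ('a \<Rightarrow> real) \<Rightarrow> bool" where
  "eps_learns U eps Ut \<longleftrightarrow> (\<exists>W. \<forall>a. \<bar>U a + W - Ut a\<bar> \<le> eps)"

end

theory Submission
  imports Defs
begin

lemma tp_append: "total_payment (xs @ ys) = total_payment xs + total_payment ys"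
  unfolding total_payment_def by simp

lemma tp_Nil: "total_payment [] = 0"
  unfolding total_payment_def by simp

lemma astar_max:
  assumes agent: "best_responder U ag"
  shows "U b \<le> U (ag 0 (\<lambda>_. 0))"
  using agent unfolding best_responder_def by (metis add.right_neutral order_refl)

lemma phase_facts:
  fixes U :: "'a \<Rightarrow> real" and t :: nat
  assumes agent: "best_responder U ag" and eps_pos: "eps > 0"
    and amax: "\<And>b. U b \<le> U astar" and ne: "a \<noteq> astar"
  defines "k \<equiv> (LEAST k::nat. ag (t + k) (pay_on a (real k * eps)) = a)"
  shows "ag (t + k) (pay_on a (real k * eps)) = a"
    and "U astar - U a \<le> real k * eps"
    and "real k * eps \<le> U astar - U a + eps"
    and "total_payment (map (\<lambda>j. (pay_on a (real j * eps), ag (t + j) (pay_on a (real j * eps)))) [0..<Suc k]) = real k * eps"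
proof -
  have nonneg: "\<And>c b. c \<ge> 0 \<Longrightarrow> pay_on a c b \<ge> 0" unfolding pay_on_def by auto
  have br: "\<And>c b s. c \<ge> 0 \<Longrightarrow> U b + pay_on a c b \<le> U (ag s (pay_on a c)) + pay_on a c (ag s (pay_on a c))"
    using agent nonneg unfolding best_responder_def by blast
  obtain n :: nat where n: "real n * eps > U astar - U a"
    using reals_Archimedean3[OF eps_pos] by blast
  have ex: "ag (t + n) (pay_on a (real n * eps)) = a"
  proof (rule ccontr)
    assume h: "\<not> ?thesis"
    have "U a + pay_on a (real n * eps) a \<le> U (ag (t+n) (pay_on a (real n * eps))) + pay_on a (real n * eps) (ag (t+n) (pay_on a (real n * eps)))"
      using br[of "real n * eps" a "t+n"] eps_pos by simp
    with h have "U a + real n * eps \<le> U (ag (t+n) (pay_on a (real n * eps)))" unfolding pay_on_def by simp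
    with amax[of "ag (t+n) (pay_on a (real n * eps))"] n show False by simp
  qed
  show play: "ag (t + k) (pay_on a (real k * eps)) = a"
    unfolding k_def by (rule LeastI[of _ n], rule ex)
  have "U astar + pay_on a (real k * eps) astar \<le> U a + pay_on a (real k * eps) a"
    using br[of "real k * eps" astar "t+k"] play eps_pos by simp
  then show "U astar - U a \<le> real k * eps" using ne unfolding pay_on_def by simp
  have less: "\<And>j. j < k \<Longrightarrow> ag (t + j) (pay_on a (real j * eps)) \<noteq> a"
    unfolding k_def by (rule not_less_Least)
  show "real k * eps \<le> U astar - U a + eps"
  proof (cases k)
    case 0 then show ?thesis using amax[of a] eps_pos by simp
  next
    case (Suc j)
    let ?b = "ag (t + j) (pay_on a (real j * eps))"
    have "?b \<noteq> a" using less Suc by simp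
    moreover have "U a + pay_on a (real j * eps) a \<le> U ?b + pay_on a (real j * eps) ?b"
      using br[of "real j * eps" a "t+j"] eps_pos by simp
    ultimately have "U a + real j * eps \<le> U ?b" unfolding pay_on_def by simp
    with amax[of ?b] Suc show ?thesis by (simp add: algebra_simps)
  qed
  let ?g = "\<lambda>j. pay_on a (real j * eps) (ag (t + j) (pay_on a (real j * eps)))"
  have "total_payment (map (\<lambda>j. (pay_on a (real j * eps), ag (t + j) (pay_on a (real j * eps)))) [0..<Suc k])
      = sum_list (map ?g [0..<Suc k])"
    unfolding total_payment_def by (simp add: o_def del: upt_Suc)
  also have "\<dots> = sum ?g {0..<Suc k}"
    by (simp only: sum_set_upt_conv_sum_list_nat[symmetric] set_upt)
  also have "\<dots> = sum ?g {0..<k} + ?g k" by simp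
  also have "sum ?g {0..<k} = 0"
    using less by (intro sum.neutral) (simp add: pay_on_def)
  also have "?g k = real k * eps" using play unfolding pay_on_def by simp
  finally show "total_payment (map (\<lambda>j. (pay_on a (real j * eps), ag (t + j) (pay_on a (real j * eps)))) [0..<Suc k]) = real k * eps"
    by simp
qed

lemma phases_facts:
  fixes U :: "'a \<Rightarrow> real"
  assumes agent: "best_responder U ag" and eps_pos: "eps > 0"
    and amax: "\<And>b. U b \<le> U astar"
  shows "distinct as \<Longrightarrow> astar \<notin> set as \<Longrightarrow>
     (\<forall>a. (a \<in> set as \<longrightarrow> U astar - U a \<le> - snd (phases ag eps t as) a
                 \<and> - snd (phases ag eps t as) a \<le> U astar - U a + eps)
        \<and> (a \<notin> set as \<longrightarrow> snd (phases ag eps t as) a = 0))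
     \<and> total_payment (fst (phases ag eps t as)) \<le> (\<Sum>a\<leftarrow>as. U astar - U a + eps)"
proof (induction as arbitrary: t)
  case Nil
  then show ?case by (simp add: tp_Nil)
next
  case (Cons a as)
  define k where "k = (LEAST k::nat. ag (t + k) (pay_on a (real k * eps)) = a)"
  have ne: "a \<noteq> astar" using Cons by auto
  note pf = phase_facts[OF agent eps_pos amax ne, of t, folded k_def]
  obtain tr' Ut where ph: "phases ag eps (t + Suc k) as = (tr', Ut)" by fastforce
  have IH: "(\<forall>b. (b \<in> set as \<longrightarrow> U astar - U b \<le> - Ut b \<and> - Ut b \<le> U astar - U b + eps)
        \<and> (b \<notin> set as \<longrightarrow> Ut b = 0)) \<and> total_payment tr' \<le> (\<Sum>a\<leftarrow>as. U astar - U a + eps)"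
    using Cons.IH[of "t + Suc k"] Cons.prems ph by simp
  have eq: "phases ag eps t (a # as) = (map (\<lambda>j. (pay_on a (real j * eps), ag (t + j) (pay_on a (real j * eps)))) [0..<Suc k] @ tr', Ut(a := - (real k * eps)))"
    using ph by (simp add: k_def[symmetric] Let_def del: upt_Suc)
  have pay: "total_payment (fst (phases ag eps t (a # as))) \<le> (\<Sum>a\<leftarrow>a # as. U astar - U a + eps)"
    unfolding eq fst_conv tp_append pf(4) using IH pf(3) by simp
  show ?case unfolding eq using IH pf Cons.prems pay[unfolded eq] by auto
qed

theorem proposition6p1:
  fixes U :: "'a::finite \<Rightarrow> real"
    and ag :: "nat \<Rightarrow> ('a \<Rightarrow> real) \<Rightarrow> 'a"
    and eps :: real
    and as :: "'a list"
  assumes U_range: "\<And>a. 0 \<le> U a \<and> U a \<le> 1"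
    and agent: "best_responder U ag"
    and eps_pos: "eps > 0"
    and order: "distinct as" "set as = UNIV - {ag 0 (\<lambda>_. 0)}"
  shows "eps_learns U eps (snd (principal_alg ag eps as)) \<and>
         total_payment (fst (principal_alg ag eps as))
           \<le> (\<Sum>a\<in>UNIV. U (ag 0 (\<lambda>_. 0)) - U a) + real (card (UNIV :: 'a set)) * eps"
proof -
  define astar where "astar = ag 0 (\<lambda>_. 0)"
  have amax: "\<And>b. U b \<le> U astar" unfolding astar_def by (rule astar_max[OF agent])
  have nin: "astar \<notin> set as" using order(2) astar_def by auto
  obtain tr Ut where ph: "phases ag eps 1 as = (tr, Ut)" by fastforce
  have F: "(\<forall>a. (a \<in> set as \<longrightarrow> U astar - U a \<le> - Ut a \<and> - Ut a \<le> U astar - U a + eps)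
        \<and> (a \<notin> set as \<longrightarrow> Ut a = 0)) \<and> total_payment tr \<le> (\<Sum>a\<leftarrow>as. U astar - U a + eps)"
    using phases_facts[OF agent eps_pos amax order(1) nin, of 1] ph by simp
  have pa: "principal_alg ag eps as = ((\<lambda>_. 0, astar) # tr, Ut(astar := 0))"
    unfolding principal_alg_def astar_def[symmetric] using ph by (simp add: Let_def astar_def)
  have learn: "eps_learns U eps (Ut(astar := 0))"
    unfolding eps_learns_def
  proof (intro exI[of _ "- U astar"] allI)
    fix a
    show "\<bar>U a + - U astar - (Ut(astar := 0)) a\<bar> \<le> eps"
    proof (cases "a = astar")
      case True then show ?thesis using eps_pos by simp
    next
      case False
      then have "a \<in> set as" using order(2) astar_def by auto
      then show ?thesis using F False by auto
    qed
  qed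
  have "(\<Sum>a\<leftarrow>as. U astar - U a + eps) = (\<Sum>a\<in>set as. U astar - U a + eps)"
    using order(1) by (simp add: sum_list_distinct_conv_sum_set)
  also have "\<dots> = (\<Sum>a\<in>UNIV - {astar}. U astar - U a) + real (card (UNIV - {astar})) * eps"
    using order(2) astar_def by (simp add: sum.distrib)
  also have "(\<Sum>a\<in>UNIV - {astar}. U astar - U a) = (\<Sum>a\<in>UNIV. U astar - U a)"
    by (rule sum.mono_neutral_left) auto
  also have "real (card (UNIV - {astar})) * eps \<le> real (card (UNIV :: 'a set)) * eps"
    using eps_pos by (simp add: card_mono)
  finally have pay: "total_payment tr \<le> (\<Sum>a\<in>UNIV. U astar - U a) + real (card (UNIV :: 'a set)) * eps"
    using F by linarith
  have "total_payment ((\<lambda>_. 0, astar) # tr) = total_payment tr"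
    unfolding total_payment_def by simp
  then show ?thesis using learn pay pa astar_def by simp
qed

end
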